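(* Let $s,t\in\mathbb{R}$ with $s\ne0$, $t\neq0$, $s^2+4t>0$, and let $a,\xi\in\mathbb{C}$. Consider the equation $(\mathbf{D}_{s,t}y)(x)=a\,y(\varphi_{s,t}x)$. (All identities below are asserted at points where the involved series converge.) (1) $f(x)=\xi\,\mathrm{Exp}_{s,t}(ax)$ is a solution with $f(0)=\xi$. (2) For $\eta$ with $\mathrm{Exp}_{s,t}(a\eta)$ and $\mathrm{Exp}'_{s,t}(-a\eta)$ convergent, $f(x)=\xi\,\mathrm{Exp}_{s,t}(ax)\,\mathrm{Exp}'_{s,t}(-a\eta)$ is a solution with $f(\eta)=\xi$. (3) If $\eta>0$ and $f(x)=\mathrm{Exp}_{s,t}(ax)\mathrm{Exp}'_{s,t}(-a\eta)$ (a solution with $f(\eta)=1$), then for every function $p$ with $p(qy)=p(y)$ for all $y\ne0$, where $q=\varphi'_{s,t}/\varphi_{s,t}$, the function $g(x)=p(x)f(x)$ is also a solution, and $g(\eta)=p(\eta)$.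
   Context: $\varphi_{s,t}=\frac{s+\sqrt{s^2+4t}}{2}$, $\varphi'_{s,t}=\frac{s-\sqrt{s^2+4t}}{2}$. Generalized Fibonacci polynomials: $\{0\}_{s,t}=0$, $\{1\}_{s,t}=1$, $\{n+2\}_{s,t}=s\{n+1\}_{s,t}+t\{n\}_{s,t}$; Fibotorial $\{n\}_{s,t}!=\prod_{k=1}^n\{k\}_{s,t}$, $\{0\}_{s,t}!=1$. $\mathrm{Exp}_{s,t}(z)=\sum_{n\ge0}\varphi_{s,t}^{\binom n2}z^n/\{n\}_{s,t}!$, $\mathrm{Exp}'_{s,t}(z)=\sum_{n\ge0}\varphi_{s,t}'^{\,\binom n2}z^n/\{n\}_{s,t}!$. The $(s,t)$-derivative: $(\mathbf{D}_{s,t}f)(x)=\frac{f(\varphi_{s,t}x)-f(\varphi'_{s,t}x)}{(\varphi_{s,t}-\varphi'_{s,t})x}$ for $x\ne0$, $(\mathbf{D}_{s,t}f)(0)=f'(0)$. In the paper the $q$-periodic functions are written $G(\log_q(x))$ with $G$ periodic of period one. *)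

theory Defs
  imports "HOL-Analysis.Analysis"
begin

definition phi :: "real \<Rightarrow> real \<Rightarrow> real" where
  "phi s t = (s + sqrt (s\<^sup>2 + 4 * t)) / 2"

definition phi' :: "real \<Rightarrow> real \<Rightarrow> real" where
  "phi' s t = (s - sqrt (s\<^sup>2 + 4 * t)) / 2"

fun fibp :: "real \<Rightarrow> real \<Rightarrow> nat \<Rightarrow> real" where
  "fibp s t 0 = 0"
| "fibp s t (Suc 0) = 1"
| "fibp s t (Suc (Suc n)) = s * fibp s t (Suc n) + t * fibp s t n"

definition fibfact :: "real \<Rightarrow> real \<Rightarrow> nat \<Rightarrow> real" where
  "fibfact s t n = (\<Prod>k = 1..n. fibp s t k)"

definition Exp_term :: "real \<Rightarrow> real \<Rightarrow> complex \<Rightarrow> nat \<Rightarrow> complex" where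
  "Exp_term s t z n = complex_of_real (phi s t ^ (n choose 2)) * z ^ n / complex_of_real (fibfact s t n)"

definition Exp'_term :: "real \<Rightarrow> real \<Rightarrow> complex \<Rightarrow> nat \<Rightarrow> complex" where
  "Exp'_term s t z n = complex_of_real (phi' s t ^ (n choose 2)) * z ^ n / complex_of_real (fibfact s t n)"

definition Exp_st :: "real \<Rightarrow> real \<Rightarrow> complex \<Rightarrow> complex" where
  "Exp_st s t z = (\<Sum>n. Exp_term s t z n)"

definition Exp'_st :: "real \<Rightarrow> real \<Rightarrow> complex \<Rightarrow> complex" where
  "Exp'_st s t z = (\<Sum>n. Exp'_term s t z n)"

definition stD :: "real \<Rightarrow> real \<Rightarrow> (real \<Rightarrow> complex) \<Rightarrow> real \<Rightarrow> complex" where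
  "stD s t f x = (if x = 0 then vector_derivative f (at 0)
     else (f (phi s t * x) - f (phi' s t * x)) / complex_of_real ((phi s t - phi' s t) * x))"

text \<open>y solves (D y)(x) = a y(phi x) at the point x (at x = 0 we also require that
  f'(0) exists, so that (D y)(0) is meaningful).\<close>
definition solves_at :: "real \<Rightarrow> real \<Rightarrow> complex \<Rightarrow> (real \<Rightarrow> complex) \<Rightarrow> real \<Rightarrow> bool" where
  "solves_at s t a y x \<longleftrightarrow> (x = 0 \<longrightarrow> y differentiable (at 0)) \<and> stD s t y x = a * y (phi s t * x)"

end

theory Submission
  imports Defs
begin


lemma phi_basic:
  assumes d: "s\<^sup>2 + 4 * t > 0" and s: "s \<noteq> 0" and t: "t \<noteq> 0"
  shows "phi s t + phi' s t = s" "phi s t * phi' s t = - t" "phi s t \<noteq> phi' s t"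
        "phi s t \<noteq> 0" "phi' s t \<noteq> 0" "\<bar>phi s t\<bar> \<noteq> \<bar>phi' s t\<bar>"
proof -
  have sq: "sqrt (s\<^sup>2 + 4 * t) ^ 2 = s\<^sup>2 + 4 * t" using d by simp
  have sp: "sqrt (s\<^sup>2 + 4 * t) > 0" using d by simp
  show 1: "phi s t + phi' s t = s" by (simp add: phi_def phi'_def field_simps)
  show 2: "phi s t * phi' s t = - t"
    unfolding phi_def phi'_def using sq by (simp add: field_simps power2_eq_square)
  show 3: "phi s t \<noteq> phi' s t" using sp by (simp add: phi_def phi'_def)
  show "phi s t \<noteq> 0" "phi' s t \<noteq> 0" using 2 t by auto
  show "\<bar>phi s t\<bar> \<noteq> \<bar>phi' s t\<bar>" using 1 3 s by (auto simp: abs_if split: if_splits)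
qed

lemma fib_closed:
  assumes d: "s\<^sup>2 + 4 * t > 0" and s: "s \<noteq> 0" and t: "t \<noteq> 0"
  shows "fibp s t n = (phi s t ^ n - phi' s t ^ n) / (phi s t - phi' s t)"
proof -
  note b = phi_basic[OF d s t]
  define p where "p = phi s t"
  define p' where "p' = phi' s t"
  have ne: "p - p' \<noteq> 0" using b by (simp add: p_def p'_def)
  have sv: "s = p + p'" and tv: "t = - (p * p')" using b by (simp_all add: p_def p'_def)
  have "fibp s t n = (p ^ n - p' ^ n) / (p - p') \<and> fibp s t (Suc n) = (p ^ Suc n - p' ^ Suc n) / (p - p')"
  proof (induction n)
    case 0
    then show ?case using ne by simp
  next
    case (Suc n)
    have "fibp s t (Suc (Suc n)) = s * fibp s t (Suc n) + t * fibp s t n" by simp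
    also have "\<dots> = (p + p') * ((p ^ Suc n - p' ^ Suc n) / (p - p')) - p * p' * ((p ^ n - p' ^ n) / (p - p'))"
      using Suc by (simp add: sv tv)
    also have "\<dots> = ((p + p') * (p ^ Suc n - p' ^ Suc n) - p * p' * (p ^ n - p' ^ n)) / (p - p')"
      by (simp add: right_diff_distrib diff_divide_distrib)
    also have "(p + p') * (p ^ Suc n - p' ^ Suc n) - p * p' * (p ^ n - p' ^ n) = p ^ Suc (Suc n) - p' ^ Suc (Suc n)"
      by (simp add: algebra_simps)
    finally show ?case using Suc by simp
  qed
  then show ?thesis by (simp add: p_def p'_def)
qed



definition nt :: "real \<Rightarrow> complex \<Rightarrow> (nat \<Rightarrow> real) \<Rightarrow> nat \<Rightarrow> real" where
  "nt \<psi> z F n = \<bar>\<psi>\<bar> ^ (n choose 2) * norm z ^ n / \<bar>\<Prod>k=1..n. F k\<bar>"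

lemma choose_Suc2: "Suc n choose 2 = (n choose 2) + n"
  using binomial_Suc_Suc[of n 1] by (simp add: numeral_2_eq_2)

lemma nt_Suc: "nt \<psi> z F (Suc n) = nt \<psi> z F n * (norm z * \<bar>\<psi>\<bar> ^ n / \<bar>F (Suc n)\<bar>)"
  unfolding nt_def choose_Suc2 by (simp add: prod.nat_ivl_Suc' abs_mult power_add)

lemma nt_0: "nt \<psi> z F 0 = 1" by (simp add: nt_def numeral_2_eq_2)

lemma F_bounds:
  fixes M m :: real and F :: "nat \<Rightarrow> real"
  assumes "\<bar>m\<bar> < \<bar>M\<bar>" "\<And>k. F k = (M ^ k - m ^ k) / (M - m)"
  shows "\<bar>F k\<bar> \<ge> (\<bar>M\<bar> ^ k - \<bar>m\<bar> ^ k) / \<bar>M - m\<bar>"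
        "\<bar>F k\<bar> \<le> (\<bar>M\<bar> ^ k + \<bar>m\<bar> ^ k) / \<bar>M - m\<bar>"
proof -
  have "\<bar>F k\<bar> = \<bar>M ^ k - m ^ k\<bar> / \<bar>M - m\<bar>" unfolding assms(2) by (rule abs_divide)
  moreover have "\<bar>M ^ k - m ^ k\<bar> \<ge> \<bar>M\<bar> ^ k - \<bar>m\<bar> ^ k"
    by (metis abs_triangle_ineq2 power_abs)
  moreover have "\<bar>M ^ k - m ^ k\<bar> \<le> \<bar>M\<bar> ^ k + \<bar>m\<bar> ^ k"
    by (metis abs_triangle_ineq4 power_abs)
  ultimately show "\<bar>F k\<bar> \<ge> (\<bar>M\<bar> ^ k - \<bar>m\<bar> ^ k) / \<bar>M - m\<bar>"
        "\<bar>F k\<bar> \<le> (\<bar>M\<bar> ^ k + \<bar>m\<bar> ^ k) / \<bar>M - m\<bar>"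
    by (simp_all add: divide_right_mono)
qed

lemma nt_summable:
  fixes M m :: real and F :: "nat \<Rightarrow> real"
  assumes mM: "\<bar>m\<bar> < \<bar>M\<bar>" and Fd: "\<And>k. F k = (M ^ k - m ^ k) / (M - m)"
    and psi: "\<bar>\<psi>\<bar> \<le> \<bar>M\<bar>" and alt: "\<bar>\<psi>\<bar> < \<bar>M\<bar> \<or> norm z * \<bar>M - m\<bar> < \<bar>M\<bar>"
  shows "summable (nt \<psi> z F)"
proof -
  have M0: "\<bar>M\<bar> > 0" using mM by linarith
  have Mm: "\<bar>M - m\<bar> > 0" using mM by auto
  define q where "q = \<bar>m\<bar> / \<bar>M\<bar>"
  define \<rho> where "\<rho> = \<bar>\<psi>\<bar> / \<bar>M\<bar>"
  define R where "R = norm z * \<bar>M - m\<bar> / \<bar>M\<bar>"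
  have q0: "0 \<le> q" "q < 1" using mM M0 by (auto simp: q_def)
  have r0: "0 \<le> \<rho>" "\<rho> \<le> 1" using psi M0 by (auto simp: \<rho>_def)
  have R0: "0 \<le> R" by (simp add: R_def)
  define B where "B n = R * \<rho> ^ n / (1 - q ^ Suc n)" for n
  obtain L where L: "B \<longlonglongrightarrow> L" "L < 1" "0 \<le> L"
  proof (cases "\<rho> < 1")
    case True
    have "B \<longlonglongrightarrow> R * 0 / (1 - 0)" unfolding B_def
      using q0 r0 True
      by (intro tendsto_intros LIMSEQ_power_zero LIMSEQ_Suc) auto
    then show ?thesis using that by simp
  next
    case False
    then have "\<rho> = 1" using r0 by simp
    then have "\<bar>\<psi>\<bar> = \<bar>M\<bar>" using M0 by (simp add: \<rho>_def)
    then have "R < 1" using alt M0 by (simp add: R_def)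
    have "B \<longlonglongrightarrow> R * 1 / (1 - 0)" unfolding B_def \<open>\<rho> = 1\<close>
      using q0 by (intro tendsto_intros LIMSEQ_power_zero LIMSEQ_Suc) auto
    then show ?thesis using that \<open>R < 1\<close> R0 by simp
  qed
  define c where "c = (1 + L) / 2"
  have "eventually (\<lambda>n. B n < c) sequentially"
    using L by (intro order_tendstoD(2)[OF L(1)]) (simp add: c_def)
  then obtain N where N: "\<And>n. n \<ge> N \<Longrightarrow> B n < c" by (auto simp: eventually_sequentially)
  have ratio: "norm z * \<bar>\<psi>\<bar> ^ n / \<bar>F (Suc n)\<bar> \<le> B n" for n
  proof -
    have "q ^ n \<le> 1" using q0 by (simp add: power_le_one)
    then have "q * q ^ n \<le> q" using q0 by (simp add: mult_left_le)
    then have qn: "q ^ Suc n < 1" using q0 by simp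
    have D: "\<bar>M\<bar> ^ Suc n - \<bar>m\<bar> ^ Suc n > 0"
      using power_strict_mono[of "\<bar>m\<bar>" "\<bar>M\<bar>" "Suc n"] mM by simp
    have Fb: "\<bar>F (Suc n)\<bar> \<ge> (\<bar>M\<bar> ^ Suc n - \<bar>m\<bar> ^ Suc n) / \<bar>M - m\<bar>"
      using F_bounds[OF mM Fd] by blast
    have Fp: "(\<bar>M\<bar> ^ Suc n - \<bar>m\<bar> ^ Suc n) / \<bar>M - m\<bar> > 0" using D Mm by simp
    have "norm z * \<bar>\<psi>\<bar> ^ n / \<bar>F (Suc n)\<bar> \<le> norm z * \<bar>\<psi>\<bar> ^ n / ((\<bar>M\<bar> ^ Suc n - \<bar>m\<bar> ^ Suc n) / \<bar>M - m\<bar>)"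
    proof (rule divide_left_mono[OF Fb])
      have "0 < \<bar>F (Suc n)\<bar>" using Fb Fp by linarith
      then show "0 < \<bar>F (Suc n)\<bar> * ((\<bar>M\<bar> ^ Suc n - \<bar>m\<bar> ^ Suc n) / \<bar>M - m\<bar>)"
        using Fp by (rule mult_pos_pos)
    qed simp
    also have "\<dots> = B n"
    proof -
      have "1 - q ^ Suc n = (\<bar>M\<bar> ^ Suc n - \<bar>m\<bar> ^ Suc n) / \<bar>M\<bar> ^ Suc n"
        using M0 by (simp add: q_def power_divide field_simps)
      then show ?thesis using M0 D Mm
        unfolding B_def R_def \<rho>_def by (simp add: power_divide field_simps)
    qed
    finally show ?thesis .
  qed
  show ?thesis
  proof (rule summable_ratio_test[of c N])
    show "c < 1" using L by (simp add: c_def)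
    fix n assume "n \<ge> N"
    have nn: "nt \<psi> z F n \<ge> 0" by (simp add: nt_def)
    have "norm (nt \<psi> z F (Suc n)) = nt \<psi> z F n * (norm z * \<bar>\<psi>\<bar> ^ n / \<bar>F (Suc n)\<bar>)"
      using nn by (simp add: nt_Suc)
    also have "\<dots> \<le> nt \<psi> z F n * c"
      using ratio[of n] N[OF \<open>n \<ge> N\<close>] nn by (intro mult_left_mono) auto
    finally show "norm (nt \<psi> z F (Suc n)) \<le> c * norm (nt \<psi> z F n)" using nn by (simp add: mult.commute)
  qed
qed

lemma nt_not_tendsto0:
  fixes M m :: real and F :: "nat \<Rightarrow> real"
  assumes mM: "\<bar>m\<bar> < \<bar>M\<bar>" and Fd: "\<And>k. F k = (M ^ k - m ^ k) / (M - m)"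
    and psi: "\<bar>\<psi>\<bar> = \<bar>M\<bar>" and big: "norm z * \<bar>M - m\<bar> \<ge> \<bar>M\<bar>"
  shows "\<not> (nt \<psi> z F \<longlonglongrightarrow> 0)"
proof
  assume lim: "nt \<psi> z F \<longlonglongrightarrow> 0"
  have M0: "\<bar>M\<bar> > 0" using mM by linarith
  have Mm: "\<bar>M - m\<bar> > 0" using mM by auto
  define q where "q = \<bar>m\<bar> / \<bar>M\<bar>"
  have q0: "0 \<le> q" "q < 1" using mM M0 by (auto simp: q_def)
  have ratio: "norm z * \<bar>\<psi>\<bar> ^ n / \<bar>F (Suc n)\<bar> \<ge> exp (- (q ^ Suc n))" for n
  proof -
    define Q where "Q = q ^ Suc n"
    have Q0: "Q \<ge> 0" using q0 by (simp add: Q_def)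
    have D: "\<bar>M\<bar> ^ Suc n - \<bar>m\<bar> ^ Suc n > 0"
      using power_strict_mono[of "\<bar>m\<bar>" "\<bar>M\<bar>" "Suc n"] mM by simp
    have Fb: "\<bar>F (Suc n)\<bar> \<ge> (\<bar>M\<bar> ^ Suc n - \<bar>m\<bar> ^ Suc n) / \<bar>M - m\<bar>"
              "\<bar>F (Suc n)\<bar> \<le> (\<bar>M\<bar> ^ Suc n + \<bar>m\<bar> ^ Suc n) / \<bar>M - m\<bar>"
      using F_bounds[OF mM Fd] by blast+
    have Fp: "\<bar>F (Suc n)\<bar> > 0" using Fb(1) D Mm
      by (metis divide_pos_pos order_less_le_trans)
    have mQ: "\<bar>m\<bar> ^ Suc n = Q * \<bar>M\<bar> ^ Suc n"
      using M0 by (simp add: Q_def q_def power_divide)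
    have "\<bar>F (Suc n)\<bar> \<le> \<bar>M\<bar> ^ Suc n * (1 + Q) / \<bar>M - m\<bar>"
      using Fb(2) mQ by (simp add: algebra_simps)
    also have "\<dots> = \<bar>M\<bar> * \<bar>M\<bar> ^ n * (1 + Q) / \<bar>M - m\<bar>" by simp
    also have "\<dots> \<le> norm z * \<bar>M - m\<bar> * \<bar>M\<bar> ^ n * (1 + Q) / \<bar>M - m\<bar>"
      using big Q0 Mm by (intro divide_right_mono mult_right_mono) auto
    also have "\<dots> = norm z * \<bar>\<psi>\<bar> ^ n * (1 + Q)" using Mm psi by simp
    finally have "\<bar>F (Suc n)\<bar> \<le> norm z * \<bar>\<psi>\<bar> ^ n * (1 + Q)" .
    then have "1 / (1 + Q) \<le> norm z * \<bar>\<psi>\<bar> ^ n / \<bar>F (Suc n)\<bar>"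
      using Fp Q0 by (simp add: field_simps)
    moreover have "exp (- Q) \<le> 1 / (1 + Q)"
    proof -
      have "1 + Q \<le> exp Q" by (rule exp_ge_add_one_self)
      then show ?thesis using Q0 by (simp add: exp_minus field_simps)
    qed
    ultimately show ?thesis by (simp add: Q_def)
  qed
  have low: "nt \<psi> z F n \<ge> exp (- (\<Sum>k<n. q ^ Suc k))" for n
  proof (induction n)
    case 0
    then show ?case by (simp add: nt_0)
  next
    case (Suc n)
    have "exp (- (\<Sum>k<Suc n. q ^ Suc k)) = exp (- (\<Sum>k<n. q ^ Suc k)) * exp (- (q ^ Suc n))"
      by (simp add: exp_add[symmetric])
    also have "\<dots> \<le> nt \<psi> z F n * (norm z * \<bar>\<psi>\<bar> ^ n / \<bar>F (Suc n)\<bar>)"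
      using Suc ratio[of n] by (intro mult_mono) (auto simp: nt_def)
    finally show ?case by (simp add: nt_Suc)
  qed
  have sb: "(\<Sum>k<n. q ^ Suc k) \<le> 1 / (1 - q)" for n
  proof -
    have "(\<Sum>k<n. q ^ Suc k) \<le> (\<Sum>k<n. q ^ k)"
      using q0 by (intro sum_mono) (simp add: mult_left_le_one_le)
    also have "\<dots> = (1 - q ^ n) / (1 - q)" using q0 by (simp add: sum_gp_strict)
    also have "\<dots> \<le> 1 / (1 - q)" using q0 by (intro divide_right_mono) auto
    finally show ?thesis .
  qed
  have pos: "nt \<psi> z F n \<ge> exp (- (1 / (1 - q)))" for n
    using low[of n] sb[of n] by (meson exp_le_cancel_iff neg_le_iff_le order_trans)
  have "eventually (\<lambda>n. nt \<psi> z F n < exp (- (1 / (1 - q)))) sequentially"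
    by (rule order_tendstoD(2)[OF lim]) simp
  then obtain n where "nt \<psi> z F n < exp (- (1 / (1 - q)))" by (auto simp: eventually_sequentially)
  with pos[of n] show False by simp
qed



definition alpha :: "real \<Rightarrow> real \<Rightarrow> real \<Rightarrow> nat \<Rightarrow> real" where
  "alpha \<psi> s t n = \<psi> ^ (n choose 2) / fibfact s t n"

definition gterm :: "real \<Rightarrow> real \<Rightarrow> real \<Rightarrow> complex \<Rightarrow> nat \<Rightarrow> complex" where
  "gterm \<psi> s t z n = of_real (alpha \<psi> s t n) * z ^ n"

lemma Exp_term_g: "Exp_term s t = gterm (phi s t) s t"
  by (intro ext) (simp add: Exp_term_def gterm_def alpha_def)

lemma Exp'_term_g: "Exp'_term s t = gterm (phi' s t) s t"
  by (intro ext) (simp add: Exp'_term_def gterm_def alpha_def)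

lemma norm_gterm: "norm (gterm \<psi> s t z n) = nt \<psi> z (fibp s t) n"
  unfolding gterm_def norm_mult norm_of_real norm_power
  by (simp add: alpha_def nt_def fibfact_def power_abs abs_divide)

lemma fibfact_Suc: "fibfact s t (Suc n) = fibfact s t n * fibp s t (Suc n)"
  by (simp add: fibfact_def prod.nat_ivl_Suc' mult.commute)

context
  fixes s t :: real
  assumes d: "s\<^sup>2 + 4 * t > 0" and s0: "s \<noteq> 0" and t0: "t \<noteq> 0"
begin

lemma fib_nz: "n \<ge> 1 \<Longrightarrow> fibp s t n \<noteq> 0"
proof
  assume n: "n \<ge> 1" and z: "fibp s t n = 0"
  note b = phi_basic[OF d s0 t0]
  have "phi s t ^ n = phi' s t ^ n" using z b unfolding fib_closed[OF d s0 t0] by simp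
  then have "\<bar>phi s t\<bar> ^ n = \<bar>phi' s t\<bar> ^ n" by (metis power_abs)
  then have "\<bar>phi s t\<bar> = \<bar>phi' s t\<bar>" using n by (simp add: power_eq_iff_eq_base)
  then show False using b by simp
qed

lemma fibfact_nz: "fibfact s t n \<noteq> 0"
  unfolding fibfact_def using fib_nz by (simp add: prod_zero_iff)

lemma alpha_Suc: "alpha \<psi> s t (Suc n) * fibp s t (Suc n) = \<psi> ^ n * alpha \<psi> s t n"
  using fib_nz[of "Suc n"] fibfact_nz[of n]
  by (simp add: alpha_def fibfact_Suc choose_Suc2 power_add field_simps)

lemma fib_add: "fibp s t (i + j) = phi s t ^ j * fibp s t i + phi' s t ^ i * fibp s t j"
proof -
  note b = phi_basic[OF d s0 t0]
  have ne: "phi s t - phi' s t \<noteq> 0" using b by simp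
  have "phi s t ^ j * ((phi s t ^ i - phi' s t ^ i) / (phi s t - phi' s t)) +
        phi' s t ^ i * ((phi s t ^ j - phi' s t ^ j) / (phi s t - phi' s t))
      = (phi s t ^ j * (phi s t ^ i - phi' s t ^ i) + phi' s t ^ i * (phi s t ^ j - phi' s t ^ j)) / (phi s t - phi' s t)"
    by (simp add: add_divide_distrib)
  also have "phi s t ^ j * (phi s t ^ i - phi' s t ^ i) + phi' s t ^ i * (phi s t ^ j - phi' s t ^ j)
     = phi s t ^ (i + j) - phi' s t ^ (i + j)" by (simp add: algebra_simps power_add)
  finally show ?thesis unfolding fib_closed[OF d s0 t0] by simp
qed

lemma MM: "\<exists>M m. \<bar>m\<bar> < \<bar>M\<bar> \<and> (\<forall>k. fibp s t k = (M ^ k - m ^ k) / (M - m)) \<and>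
   ((M = phi s t \<and> m = phi' s t) \<or> (M = phi' s t \<and> m = phi s t))"
proof -
  note b = phi_basic[OF d s0 t0]
  have fc: "\<forall>k. fibp s t k = (phi s t ^ k - phi' s t ^ k) / (phi s t - phi' s t)"
    using fib_closed[OF d s0 t0] by blast
  have fc': "\<forall>k. fibp s t k = (phi' s t ^ k - phi s t ^ k) / (phi' s t - phi s t)"
    using fc by (metis minus_diff_eq minus_divide_divide)
  show ?thesis
  proof (cases "\<bar>phi' s t\<bar> < \<bar>phi s t\<bar>")
    case True then show ?thesis using fc by blast
  next
    case False then have "\<bar>phi s t\<bar> < \<bar>phi' s t\<bar>" using b by linarith
    then show ?thesis using fc' by blast
  qed
qed

lemma gterm_abs:
  assumes psi: "\<psi> = phi s t \<or> \<psi> = phi' s t" and sm: "summable (gterm \<psi> s t z)"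
  shows "summable (\<lambda>n. norm (gterm \<psi> s t z n))"
proof -
  obtain M m where mM: "\<bar>m\<bar> < \<bar>M\<bar>" and Fd: "\<And>k. fibp s t k = (M ^ k - m ^ k) / (M - m)"
    and which: "(M = phi s t \<and> m = phi' s t) \<or> (M = phi' s t \<and> m = phi s t)"
    using MM by blast
  have "summable (nt \<psi> z (fibp s t))"
  proof (cases "\<psi> = M")
    case True
    show ?thesis
    proof (cases "norm z * \<bar>M - m\<bar> < \<bar>M\<bar>")
      case True
      then show ?thesis using nt_summable[OF mM Fd] \<open>\<psi> = M\<close> by auto
    next
      case False
      have "gterm \<psi> s t z \<longlonglongrightarrow> 0" using sm by (rule summable_LIMSEQ_zero)
      then have "(\<lambda>n. norm (gterm \<psi> s t z n)) \<longlonglongrightarrow> 0" by (rule tendsto_norm_zero)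
      then have "nt \<psi> z (fibp s t) \<longlonglongrightarrow> 0" by (simp add: norm_gterm)
      moreover have "\<not> (nt \<psi> z (fibp s t) \<longlonglongrightarrow> 0)"
        using nt_not_tendsto0[OF mM Fd] \<open>\<psi> = M\<close> False by auto
      ultimately show ?thesis by blast
    qed
  next
    case False
    then have "\<psi> = m" using psi which by auto
    then show ?thesis using nt_summable[OF mM Fd] mM by auto
  qed
  then show ?thesis by (simp add: norm_gterm)
qed

lemma gterm_small:
  assumes psi: "\<psi> = phi s t \<or> \<psi> = phi' s t"
  shows "\<exists>K. K \<noteq> 0 \<and> summable (\<lambda>n. norm (gterm \<psi> s t K n))"
proof -
  obtain M m where mM: "\<bar>m\<bar> < \<bar>M\<bar>" and Fd: "\<And>k. fibp s t k = (M ^ k - m ^ k) / (M - m)"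
    and which: "(M = phi s t \<and> m = phi' s t) \<or> (M = phi' s t \<and> m = phi s t)"
    using MM by blast
  have M0: "\<bar>M\<bar> > 0" using mM by linarith
  have Mm: "\<bar>M - m\<bar> > 0" using mM by auto
  define K :: complex where "K = of_real (\<bar>M\<bar> / (2 * \<bar>M - m\<bar>))"
  have "norm K = \<bar>M\<bar> / (2 * \<bar>M - m\<bar>)" unfolding K_def norm_of_real by simp
  then have "norm K * \<bar>M - m\<bar> = \<bar>M\<bar> / 2" using M0 Mm by simp
  then have "norm K * \<bar>M - m\<bar> < \<bar>M\<bar>" using M0 by simp
  moreover have "\<bar>\<psi>\<bar> \<le> \<bar>M\<bar>" using psi which mM by auto
  ultimately have "summable (nt \<psi> K (fibp s t))" using nt_summable[OF mM Fd] by blast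
  moreover have "K \<noteq> 0" using M0 Mm by (simp add: K_def)
  ultimately show ?thesis by (auto simp: norm_gterm)
qed

definition gam :: "nat \<Rightarrow> real" where "gam j = alpha (phi' s t) s t j * (-1) ^ j"
definition cc :: "nat \<Rightarrow> real" where "cc n = (\<Sum>i\<le>n. alpha (phi s t) s t i * gam (n - i))"

lemma gam_Suc: "gam (Suc j) * fibp s t (Suc j) = - (phi' s t ^ j * gam j)"
  using alpha_Suc[of "phi' s t" j] unfolding gam_def by (simp add: algebra_simps)

lemma cc_rec: "cc (Suc n) * fibp s t (Suc n) = (phi s t ^ n - phi' s t ^ n) * cc n"
proof -
  define p where "p = phi s t"
  define p' where "p' = phi' s t"
  define A where "A = alpha p s t"
  have fa: "fibp s t (Suc n) = p ^ (Suc n - i) * fibp s t i + p' ^ i * fibp s t (Suc n - i)" if "i \<le> Suc n" for i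
    using fib_add[of i "Suc n - i"] that by (simp add: p_def p'_def)
  have "cc (Suc n) * fibp s t (Suc n) = (\<Sum>i\<le>Suc n. A i * gam (Suc n - i) * fibp s t (Suc n))"
    unfolding cc_def A_def p_def by (rule sum_distrib_right)
  also have "\<dots> = (\<Sum>i\<le>Suc n. (A i * fibp s t i) * (p ^ (Suc n - i) * gam (Suc n - i)))
                 + (\<Sum>i\<le>Suc n. A i * p' ^ i * (gam (Suc n - i) * fibp s t (Suc n - i)))"
    by (subst sum.distrib[symmetric], rule sum.cong) (auto simp: fa algebra_simps)
  also have "(\<Sum>i\<le>Suc n. (A i * fibp s t i) * (p ^ (Suc n - i) * gam (Suc n - i)))
      = (\<Sum>i\<le>n. (A (Suc i) * fibp s t (Suc i)) * (p ^ (n - i) * gam (n - i)))"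
    by (subst sum.atMost_Suc_shift) simp
  also have "\<dots> = (\<Sum>i\<le>n. p ^ n * (A i * gam (n - i)))"
  proof (rule sum.cong)
    fix i assume "i \<in> {..n}"
    then have "p ^ i * p ^ (n - i) = p ^ n" by (simp flip: power_add)
    then show "(A (Suc i) * fibp s t (Suc i)) * (p ^ (n - i) * gam (n - i)) = p ^ n * (A i * gam (n - i))"
      using alpha_Suc[of p i] unfolding A_def by (metis mult.assoc mult.left_commute)
  qed simp
  also have "(\<Sum>i\<le>Suc n. A i * p' ^ i * (gam (Suc n - i) * fibp s t (Suc n - i)))
      = (\<Sum>i\<le>n. A i * p' ^ i * (gam (Suc (n - i)) * fibp s t (Suc (n - i))))"
    by (subst sum.atMost_Suc) (auto intro!: sum.cong simp: Suc_diff_le)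
  also have "\<dots> = (\<Sum>i\<le>n. - (p' ^ n * (A i * gam (n - i))))"
  proof (rule sum.cong)
    fix i assume "i \<in> {..n}"
    then have "p' ^ i * p' ^ (n - i) = p' ^ n" by (simp flip: power_add)
    then show "A i * p' ^ i * (gam (Suc (n - i)) * fibp s t (Suc (n - i))) = - (p' ^ n * (A i * gam (n - i)))"
      unfolding gam_Suc p'_def by (metis mult.assoc mult.left_commute mult_minus_right)
  qed simp
  finally have eq: "cc (Suc n) * fibp s t (Suc n) = (\<Sum>i\<le>n. p ^ n * (A i * gam (n - i))) + (\<Sum>i\<le>n. - (p' ^ n * (A i * gam (n - i))))" .
  have X: "(\<Sum>i\<le>n. p ^ n * (A i * gam (n - i))) = p ^ n * cc n"
    by (simp add: cc_def A_def p_def sum_distrib_left)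
  have Y: "(\<Sum>i\<le>n. - (p' ^ n * (A i * gam (n - i)))) = - (p' ^ n * cc n)"
    by (simp add: cc_def A_def p_def sum_distrib_left sum_negf)
  show ?thesis unfolding eq X Y by (simp add: p_def p'_def algebra_simps)
qed

lemma cc_val: "cc n = (if n = 0 then 1 else 0)"
proof (induction n)
  case 0
  then show ?case by (simp add: cc_def gam_def alpha_def fibfact_def numeral_2_eq_2)
next
  case (Suc n)
  have r: "cc (Suc n) * fibp s t (Suc n) = (phi s t ^ n - phi' s t ^ n) * cc n" by (rule cc_rec)
  have "(phi s t ^ n - phi' s t ^ n) * cc n = 0" using Suc.IH by (cases n) auto
  then have "cc (Suc n) * fibp s t (Suc n) = 0" by (simp only: r)
  then show ?case using fib_nz[of "Suc n"] by simp
qed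

lemma prod_one:
  assumes a: "summable (\<lambda>n. norm (Exp_term s t z n))"
      and b: "summable (\<lambda>n. norm (Exp'_term s t (- z) n))"
  shows "Exp_st s t z * Exp'_st s t (- z) = 1"
proof -
  have "Exp_st s t z * Exp'_st s t (- z) = (\<Sum>k. \<Sum>i\<le>k. Exp_term s t z i * Exp'_term s t (- z) (k - i))"
    unfolding Exp_st_def Exp'_st_def by (rule Cauchy_product[OF a b])
  also have "\<dots> = (\<Sum>k. if k = 0 then 1 else 0)"
  proof (rule arg_cong[where f = suminf], rule ext)
    fix k
    have "(\<Sum>i\<le>k. Exp_term s t z i * Exp'_term s t (- z) (k - i))
        = (\<Sum>i\<le>k. of_real (alpha (phi s t) s t i * gam (k - i)) * z ^ k)"
    proof (rule sum.cong)
      fix i assume "i \<in> {..k}"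
      then have "z ^ i * z ^ (k - i) = z ^ k" by (simp flip: power_add)
      have "Exp_term s t z i * Exp'_term s t (- z) (k - i) =
          of_real (alpha (phi s t) s t i) * of_real (alpha (phi' s t) s t (k - i)) * (-1) ^ (k - i) * (z ^ i * z ^ (k - i))"
        unfolding Exp_term_g Exp'_term_g gterm_def power_minus[of z] by (simp only: mult_ac)
      also have "\<dots> = of_real (alpha (phi s t) s t i * gam (k - i)) * z ^ k"
        unfolding gam_def \<open>z ^ i * z ^ (k - i) = z ^ k\<close> by simp
      finally show "Exp_term s t z i * Exp'_term s t (- z) (k - i) = of_real (alpha (phi s t) s t i * gam (k - i)) * z ^ k" .
    qed simp
    also have "\<dots> = of_real (cc k) * z ^ k"
      by (simp add: cc_def sum_distrib_right)
    finally show "(\<Sum>i\<le>k. Exp_term s t z i * Exp'_term s t (- z) (k - i)) = (if k = 0 then 1 else 0)"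
      by (simp add: cc_val)
  qed
  also have "\<dots> = 1"
    using sums_single[of 0 "\<lambda>_. 1 :: complex"] by (simp add: sums_iff)
  finally show ?thesis .
qed

lemma core:
  assumes x: "x \<noteq> 0"
    and s1: "summable (Exp_term s t (a * of_real (phi s t * x)))"
    and s2: "summable (Exp_term s t (a * of_real (phi' s t * x)))"
  shows "(Exp_st s t (a * of_real (phi s t * x)) - Exp_st s t (a * of_real (phi' s t * x)))
           / of_real ((phi s t - phi' s t) * x) = a * Exp_st s t (a * of_real (phi s t * x))"
proof -
  define p where "p = phi s t"
  define p' where "p' = phi' s t"
  define w where "w = a * of_real x"
  define A where "A = alpha p s t"
  note b = phi_basic[OF d s0 t0]
  have pp: "p - p' \<noteq> 0" using b by (simp add: p_def p'_def)
  have e1: "a * of_real (phi s t * x) = of_real p * w" by (simp add: p_def w_def)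
  have e2: "a * of_real (phi' s t * x) = of_real p' * w" by (simp add: p'_def w_def)
  define T1 where "T1 = Exp_term s t (of_real p * w)"
  define T2 where "T2 = Exp_term s t (of_real p' * w)"
  define K :: complex where "K = of_real ((p - p') * x)"
  have K0: "K \<noteq> 0" using pp x by (simp add: K_def)
  have S1: "summable T1" and S2: "summable T2" using s1 s2 unfolding e1 e2 T1_def T2_def by simp_all
  have "(\<lambda>n. (T1 n - T2 n) / K) sums ((suminf T1 - suminf T2) / K)"
    by (intro sums_divide sums_diff summable_sums S1 S2)
  moreover have "(\<lambda>n. (T1 n - T2 n) / K) = (\<lambda>n. if n = 0 then 0 else a * T1 (n - 1))"
  proof (rule ext)
    fix n show "(T1 n - T2 n) / K = (if n = 0 then 0 else a * T1 (n - 1))"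
    proof (cases n)
      case 0 then show ?thesis by (simp add: T1_def T2_def Exp_term_g gterm_def)
    next
      case (Suc m)
      have fc: "p ^ Suc m - p' ^ Suc m = fibp s t (Suc m) * (p - p')"
        using pp unfolding fib_closed[OF d s0 t0] p_def p'_def by simp
      have "T1 (Suc m) - T2 (Suc m) = of_real (A (Suc m)) * (of_real (p ^ Suc m - p' ^ Suc m)) * w ^ Suc m"
        unfolding T1_def T2_def Exp_term_g gterm_def A_def p_def p'_def
        by (simp add: power_mult_distrib algebra_simps)
      also have "\<dots> = of_real (A (Suc m) * fibp s t (Suc m)) * of_real (p - p') * w ^ Suc m"
        unfolding fc by simp
      also have "\<dots> = of_real (p ^ m * A m) * of_real (p - p') * w ^ Suc m"
        unfolding A_def alpha_Suc by simp
      finally have "(T1 (Suc m) - T2 (Suc m)) / K = of_real (p ^ m * A m) * w ^ m * (of_real (p - p') * w / K)"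
        by (simp add: algebra_simps)
      also have "of_real (p - p') * w / K = a" using pp x by (simp add: K_def w_def)
      also have "of_real (p ^ m * A m) * w ^ m * a = a * T1 m"
        unfolding T1_def Exp_term_g gterm_def A_def p_def by (simp add: power_mult_distrib)
      finally show ?thesis using Suc by simp
    qed
  qed
  ultimately have "(\<lambda>n. if n = 0 then 0 else a * T1 (n - 1)) sums ((suminf T1 - suminf T2) / K)" by simp
  moreover have "(\<lambda>n. if n = 0 then 0 else a * T1 (n - 1)) sums (a * suminf T1)"
  proof -
    have "(\<lambda>n. a * T1 n) sums (a * suminf T1)" by (intro sums_mult summable_sums S1)
    then have "(\<lambda>n. (\<lambda>n. if n = 0 then 0 else a * T1 (n - 1)) (Suc n)) sums (a * suminf T1)" by simp
    then show ?thesis by (subst (asm) sums_Suc_iff) simp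
  qed
  ultimately have "(suminf T1 - suminf T2) / K = a * suminf T1" by (rule sums_unique2)
  then show ?thesis unfolding e1 e2 Exp_st_def T1_def T2_def K_def p_def p'_def by simp
qed

lemma Exp_st_powser: "Exp_st s t w = (\<Sum>n. of_real (alpha (phi s t) s t n) * w ^ n)"
  unfolding Exp_st_def Exp_term_g gterm_def ..

lemma Exp_st_0: "Exp_st s t 0 = 1"
  unfolding Exp_st_powser powser_zero
  by (simp add: alpha_def fibfact_def numeral_2_eq_2)

lemma deriv0: "((\<lambda>x. Exp_st s t (a * of_real x)) has_vector_derivative a) (at 0)"
proof -
  define c :: "nat \<Rightarrow> complex" where "c n = of_real (alpha (phi s t) s t n)" for n
  define P where "P w = (\<Sum>n. c n * w ^ n)" for w
  obtain K where K: "K \<noteq> 0" "summable (\<lambda>n. norm (gterm (phi s t) s t K n))"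
    using gterm_small[of "phi s t"] by blast
  have "summable (\<lambda>n. c n * K ^ n)"
    using summable_norm_cancel[OF K(2)] by (simp add: gterm_def c_def)
  then have "DERIV P 0 :> (\<Sum>n. diffs c n * 0 ^ n)"
    unfolding P_def using K(1) by (intro termdiffs_strong) auto
  moreover have "(\<Sum>n. diffs c n * 0 ^ n) = 1"
    unfolding powser_zero by (simp add: diffs_def c_def alpha_def fibfact_def numeral_2_eq_2)
  ultimately have D1: "DERIV P 0 :> 1" by simp
  have ga: "((\<lambda>w. a * w) has_field_derivative a) (at 0)"
    by (auto intro!: derivative_eq_intros)
  have "(P \<circ> (\<lambda>w. a * w) has_field_derivative 1 * a) (at 0)"
  proof -
    have D1': "DERIV P ((\<lambda>w. a * w) 0) :> 1" using D1 by simp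
    show ?thesis by (rule DERIV_chain[OF D1' ga])
  qed
  then have "DERIV (\<lambda>w. P (a * w)) 0 :> 1 * a" by (simp add: o_def)
  then have "DERIV (\<lambda>w. P (a * w)) (of_real 0) :> a" by simp
  from has_vector_derivative_real_field[OF this]
  have "((\<lambda>x. P (a * of_real x)) has_vector_derivative a) (at 0)" by simp
  moreover have "(\<lambda>x. P (a * of_real x)) = (\<lambda>x. Exp_st s t (a * of_real x))"
    by (simp add: P_def c_def Exp_st_powser)
  ultimately show ?thesis by simp
qed

lemma solves_gen:
  assumes "x = 0 \<or> (summable (Exp_term s t (a * of_real (phi s t * x))) \<and>
                      summable (Exp_term s t (a * of_real (phi' s t * x))))"
  shows "solves_at s t a (\<lambda>x. K * Exp_st s t (a * of_real x) * L) x"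
proof (cases "x = 0")
  case True
  have hv: "((\<lambda>x. K * Exp_st s t (a * of_real x) * L) has_vector_derivative (K * a * L)) (at 0)"
    by (intro has_vector_derivative_mult_right has_vector_derivative_mult_left deriv0)
  have "(\<lambda>x. K * Exp_st s t (a * of_real x) * L) differentiable (at 0)" by (rule differentiableI_vector[OF hv])
  moreover have "stD s t (\<lambda>x. K * Exp_st s t (a * of_real x) * L) 0 = K * a * L"
    unfolding stD_def using vector_derivative_at[OF hv] by simp
  ultimately show ?thesis using True
    unfolding solves_at_def by (simp add: Exp_st_0 algebra_simps)
next
  case False
  then have S: "summable (Exp_term s t (a * of_real (phi s t * x)))"
               "summable (Exp_term s t (a * of_real (phi' s t * x)))" using assms by auto
  have "stD s t (\<lambda>x. K * Exp_st s t (a * of_real x) * L) x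
      = K * L * ((Exp_st s t (a * of_real (phi s t * x)) - Exp_st s t (a * of_real (phi' s t * x)))
           / of_real ((phi s t - phi' s t) * x))"
    using False unfolding stD_def by (simp add: algebra_simps diff_divide_distrib)
  also have "\<dots> = a * (K * Exp_st s t (a * of_real (phi s t * x)) * L)"
    unfolding core[OF False S] by (simp add: algebra_simps)
  finally show ?thesis using False unfolding solves_at_def by simp
qed

lemma solves_per:
  assumes x: "x \<noteq> 0"
    and S: "summable (Exp_term s t (a * of_real (phi s t * x)))"
           "summable (Exp_term s t (a * of_real (phi' s t * x)))"
    and per: "\<forall>y. y \<noteq> 0 \<longrightarrow> p ((phi' s t / phi s t) * y) = p y"
  shows "solves_at s t a (\<lambda>x. p x * (Exp_st s t (a * of_real x) * L)) x"
proof -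
  note b = phi_basic[OF d s0 t0]
  have "p ((phi' s t / phi s t) * (phi s t * x)) = p (phi s t * x)"
    by (rule per[rule_format]) (simp add: x b)
  moreover have "(phi' s t / phi s t) * (phi s t * x) = phi' s t * x" using b by simp
  ultimately have pe: "p (phi' s t * x) = p (phi s t * x)" by simp
  have "stD s t (\<lambda>x. p x * (Exp_st s t (a * of_real x) * L)) x
      = p (phi s t * x) * L * ((Exp_st s t (a * of_real (phi s t * x)) - Exp_st s t (a * of_real (phi' s t * x)))
           / of_real ((phi s t - phi' s t) * x))"
    using x unfolding stD_def pe by (simp add: algebra_simps diff_divide_distrib)
  also have "\<dots> = a * (p (phi s t * x) * (Exp_st s t (a * of_real (phi s t * x)) * L))"
    unfolding core[OF x S] by (simp add: algebra_simps)
  finally show ?thesis using x unfolding solves_at_def by simp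
qed

lemma f_eta:
  assumes "summable (Exp_term s t z)" "summable (Exp'_term s t (- z))"
  shows "Exp_st s t z * Exp'_st s t (- z) = 1"
proof (rule prod_one)
  show "summable (\<lambda>n. norm (Exp_term s t z n))"
    using gterm_abs[of "phi s t" z] assms(1) by (simp add: Exp_term_g)
  show "summable (\<lambda>n. norm (Exp'_term s t (- z) n))"
    using gterm_abs[of "phi' s t" "- z"] assms(2) by (simp add: Exp'_term_g)
qed

end


theorem mainTheorem12:
  fixes s t :: real and a \<xi> :: complex
  assumes "s \<noteq> 0" and "t \<noteq> 0" and "s\<^sup>2 + 4 * t > 0"
  shows
   "((\<lambda>x. \<xi> * Exp_st s t (a * of_real x)) 0 = \<xi> \<and>
     (\<forall>x. (x = 0 \<or> (summable (Exp_term s t (a * of_real (phi s t * x))) \<and>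
                      summable (Exp_term s t (a * of_real (phi' s t * x)))))
          \<longrightarrow> solves_at s t a (\<lambda>x. \<xi> * Exp_st s t (a * of_real x)) x))
    \<and>
    (\<forall>\<eta>::real. summable (Exp_term s t (a * of_real \<eta>)) \<and> summable (Exp'_term s t (- a * of_real \<eta>))
       \<longrightarrow> (let f = (\<lambda>x. \<xi> * Exp_st s t (a * of_real x) * Exp'_st s t (- a * of_real \<eta>)) in
             f \<eta> = \<xi> \<and>
             (\<forall>x. (x = 0 \<or> (summable (Exp_term s t (a * of_real (phi s t * x))) \<and>
                             summable (Exp_term s t (a * of_real (phi' s t * x)))))
                 \<longrightarrow> solves_at s t a f x)))
    \<and>
    (\<forall>(\<eta>::real) (p::real \<Rightarrow> complex).
       \<eta> > 0 \<and> summable (Exp_term s t (a * of_real \<eta>)) \<and> summable (Exp'_term s t (- a * of_real \<eta>))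
       \<and> (\<forall>y. y \<noteq> 0 \<longrightarrow> p ((phi' s t / phi s t) * y) = p y)
       \<longrightarrow> (let f = (\<lambda>x. Exp_st s t (a * of_real x) * Exp'_st s t (- a * of_real \<eta>));
                g = (\<lambda>x. p x * f x) in
             g \<eta> = p \<eta> \<and>
             (\<forall>x. x \<noteq> 0 \<and> summable (Exp_term s t (a * of_real (phi s t * x))) \<and>
                         summable (Exp_term s t (a * of_real (phi' s t * x)))
                 \<longrightarrow> solves_at s t a g x)))"
  proof -
  note d = assms(3) and s0 = assms(1) and t0 = assms(2)
  have P1a: "(\<lambda>x. \<xi> * Exp_st s t (a * of_real x)) 0 = \<xi>" by (simp add: Exp_st_0[OF d s0 t0])
  have P1b: "\<forall>x. (x = 0 \<or> (summable (Exp_term s t (a * of_real (phi s t * x))) \<and>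
                      summable (Exp_term s t (a * of_real (phi' s t * x)))))
          \<longrightarrow> solves_at s t a (\<lambda>x. \<xi> * Exp_st s t (a * of_real x)) x"
  proof (intro allI impI)
    fix x assume h: "x = 0 \<or> (summable (Exp_term s t (a * of_real (phi s t * x))) \<and>
                      summable (Exp_term s t (a * of_real (phi' s t * x))))"
    show "solves_at s t a (\<lambda>x. \<xi> * Exp_st s t (a * of_real x)) x"
      using solves_gen[OF d s0 t0 h, of \<xi> 1] by simp
  qed
  have P2: "\<forall>\<eta>::real. summable (Exp_term s t (a * of_real \<eta>)) \<and> summable (Exp'_term s t (- a * of_real \<eta>))
       \<longrightarrow> (let f = (\<lambda>x. \<xi> * Exp_st s t (a * of_real x) * Exp'_st s t (- a * of_real \<eta>)) in
             f \<eta> = \<xi> \<and>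
             (\<forall>x. (x = 0 \<or> (summable (Exp_term s t (a * of_real (phi s t * x))) \<and>
                             summable (Exp_term s t (a * of_real (phi' s t * x)))))
                 \<longrightarrow> solves_at s t a f x))"
  proof (intro allI impI)
    fix \<eta> :: real
    assume h: "summable (Exp_term s t (a * of_real \<eta>)) \<and> summable (Exp'_term s t (- a * of_real \<eta>))"
    have e: "- a * of_real \<eta> = - (a * of_real \<eta>)" by simp
    have one: "Exp_st s t (a * of_real \<eta>) * Exp'_st s t (- a * of_real \<eta>) = 1"
      unfolding e by (rule f_eta[OF d s0 t0]) (use h e in auto)
    show "let f = (\<lambda>x. \<xi> * Exp_st s t (a * of_real x) * Exp'_st s t (- a * of_real \<eta>)) in
             f \<eta> = \<xi> \<and>
             (\<forall>x. (x = 0 \<or> (summable (Exp_term s t (a * of_real (phi s t * x))) \<and>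
                             summable (Exp_term s t (a * of_real (phi' s t * x)))))
                 \<longrightarrow> solves_at s t a f x)"
      unfolding Let_def
    proof (intro conjI allI impI)
      show "\<xi> * Exp_st s t (a * of_real \<eta>) * Exp'_st s t (- a * of_real \<eta>) = \<xi>"
        using one by (simp add: mult.assoc)
      fix x assume hx: "x = 0 \<or> (summable (Exp_term s t (a * of_real (phi s t * x))) \<and>
                             summable (Exp_term s t (a * of_real (phi' s t * x))))"
      show "solves_at s t a (\<lambda>x. \<xi> * Exp_st s t (a * of_real x) * Exp'_st s t (- a * of_real \<eta>)) x"
        by (rule solves_gen[OF d s0 t0 hx])
    qed
  qed
  have P3: "\<forall>(\<eta>::real) (p::real \<Rightarrow> complex).
       \<eta> > 0 \<and> summable (Exp_term s t (a * of_real \<eta>)) \<and> summable (Exp'_term s t (- a * of_real \<eta>))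
       \<and> (\<forall>y. y \<noteq> 0 \<longrightarrow> p ((phi' s t / phi s t) * y) = p y)
       \<longrightarrow> (let f = (\<lambda>x. Exp_st s t (a * of_real x) * Exp'_st s t (- a * of_real \<eta>));
                g = (\<lambda>x. p x * f x) in
             g \<eta> = p \<eta> \<and>
             (\<forall>x. x \<noteq> 0 \<and> summable (Exp_term s t (a * of_real (phi s t * x))) \<and>
                         summable (Exp_term s t (a * of_real (phi' s t * x)))
                 \<longrightarrow> solves_at s t a g x))"
  proof (intro allI impI)
    fix \<eta> :: real and p :: "real \<Rightarrow> complex"
    assume h: "\<eta> > 0 \<and> summable (Exp_term s t (a * of_real \<eta>)) \<and> summable (Exp'_term s t (- a * of_real \<eta>))
       \<and> (\<forall>y. y \<noteq> 0 \<longrightarrow> p ((phi' s t / phi s t) * y) = p y)"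
    have e: "- a * of_real \<eta> = - (a * of_real \<eta>)" by simp
    have one: "Exp_st s t (a * of_real \<eta>) * Exp'_st s t (- a * of_real \<eta>) = 1"
      unfolding e by (rule f_eta[OF d s0 t0]) (use h e in auto)
    have per: "\<forall>y. y \<noteq> 0 \<longrightarrow> p ((phi' s t / phi s t) * y) = p y" using h by blast
    show "let f = (\<lambda>x. Exp_st s t (a * of_real x) * Exp'_st s t (- a * of_real \<eta>));
                g = (\<lambda>x. p x * f x) in
             g \<eta> = p \<eta> \<and>
             (\<forall>x. x \<noteq> 0 \<and> summable (Exp_term s t (a * of_real (phi s t * x))) \<and>
                         summable (Exp_term s t (a * of_real (phi' s t * x)))
                 \<longrightarrow> solves_at s t a g x)"
      unfolding Let_def
    proof (intro conjI allI impI)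
      show "p \<eta> * (Exp_st s t (a * of_real \<eta>) * Exp'_st s t (- a * of_real \<eta>)) = p \<eta>"
        using one by simp
      fix x assume hx: "x \<noteq> 0 \<and> summable (Exp_term s t (a * of_real (phi s t * x))) \<and>
                         summable (Exp_term s t (a * of_real (phi' s t * x)))"
      show "solves_at s t a (\<lambda>x. p x * (Exp_st s t (a * of_real x) * Exp'_st s t (- a * of_real \<eta>))) x"
        using hx by (intro solves_per[OF d s0 t0 _ _ _ per]) auto
    qed
  qed
  show ?thesis using P1a P1b P2 P3 by blast
qed

end
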